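(* Let $I=\{a,b\}$ with positive integers $a<b$. The sequence $(C_0(I),\ldots,C_{s(I)}(I))$ of Naruse-Newton coefficients of $I$ is log-concave if and only if $I$ is one of $\{1,2\}$, $\{1,3\}$, $\{2,3\}$, $\{2,4\}$.
   Context: Partitions are drawn as Young diagrams $\mathbb{D}(\lambda)$ in English notation; $c_{i,j}$ is the cell in row $i$, column $j$. The hook length $h_\lambda(c)$ is the number of cells of $\mathbb{D}(\lambda)$ weakly right of $c$ in its row or weakly below $c$ in its column (counting $c$ once). For $\mu\subseteq\lambda$, an excited diagram of $\lambda/\mu$ is a subset of $\mathbb{D}(\lambda)$ obtained from $\mathbb{D}(\mu)$ by repeatedly replacing a cell $c_{i,j}\in D$ by $c_{i+1,j+1}$, allowed iff $c_{i+1,j+1}\in\mathbb{D}(\lambda)$ and none of $c_{i,j+1},c_{i+1,j},c_{i+1,j+1}$ lies in $D$; $\mathbb{E}(\lambda/\mu)$ is their set. A ribbon with $n$ cells is read from its lower-left to its upper-right cell, each successive cell directly right of or directly above the previous; it corresponds to the set of $i\in\{1,\ldots,n-1\}$ with cell $i$ directly below cell $i+1$. A descent set is a non-empty finite set $I$ of positive integers; $\lambda^I$ is the unique partition with $\lambda^I_1=\lambda^I_2$ such that the cells $c_{i,j}\in\mathbb{D}(\lambda^I)$ with fewer than three of $c_{i,j+1},c_{i+1,j},c_{i+1,j+1}$ in $\mathbb{D}(\lambda^I)$ form a ribbon corresponding to $I$; this ribbon is $\mathbb{D}(\lambda^I)\setminus\mathbb{D}(\mu^I)$ for a partition $\mu^I$.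 Let $s(I)=\lambda^I_1-1$. Naruse-Newton coefficients: every excited diagram of $\lambda^I/\mu^I$ meets row 1 in $\{c_{1,1},\ldots,c_{1,r}\}$, $0\le r\le s$; for $0\le j\le s(I)$, $C_j(I)=\sum_D\prod_{c\in D,\,c\notin\text{row }1}h_{\lambda^I}(c)$, summed over $D\in\mathbb{E}(\lambda^I/\mu^I)$ with exactly $s-j$ cells in row 1. A sequence $(x_k)_{k=0}^m$ is log-concave if $x_k^2\ge x_{k-1}x_{k+1}$ for all $0<k<m$. *)

theory Defs
  imports Main
begin

text \<open>Cells are pairs (row, column), 1-indexed, English notation (row index grows downwards).
  Partitions are lists of positive integers in weakly decreasing order; parts beyond the
  length are 0.\<close>

type_synonym cell = "nat \<times> nat"

definition is_partition :: "nat list \<Rightarrow> bool" where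
  "is_partition lam \<longleftrightarrow> sorted_wrt (\<ge>) lam \<and> 0 \<notin> set lam"

definition part :: "nat list \<Rightarrow> nat \<Rightarrow> nat" where
  "part lam i = (if 1 \<le> i \<and> i \<le> length lam then lam ! (i - 1) else 0)"

definition young :: "nat list \<Rightarrow> cell set" where
  "young lam = {(i, j). 1 \<le> i \<and> 1 \<le> j \<and> j \<le> part lam i}"

definition hook :: "nat list \<Rightarrow> cell \<Rightarrow> nat" where
  "hook lam c = card {c' \<in> young lam.
      (fst c' = fst c \<and> snd c' \<ge> snd c) \<or> (snd c' = snd c \<and> fst c' \<ge> fst c)}"

definition excite_step :: "nat list \<Rightarrow> cell set \<Rightarrow> cell set \<Rightarrow> bool" where
  "excite_step lam D D' \<longleftrightarrow> (\<exists>i j. (i, j) \<in> D \<and> (i + 1, j + 1) \<in> young lam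
      \<and> (i, j + 1) \<notin> D \<and> (i + 1, j) \<notin> D \<and> (i + 1, j + 1) \<notin> D
      \<and> D' = (D - {(i, j)}) \<union> {(i + 1, j + 1)})"

definition excited_diagrams :: "nat list \<Rightarrow> nat list \<Rightarrow> cell set set" where
  "excited_diagrams lam mu = {D. (excite_step lam)\<^sup>*\<^sup>* (young mu) D}"

text \<open>A ribbon with n cells, read c 1, ..., c n from lower-left to upper-right, each cell
  directly right of or directly above the previous one; it corresponds to the set of
  i in {1..n-1} with c i directly below c (i+1).\<close>
definition ribbon_of :: "cell set \<Rightarrow> nat set \<Rightarrow> bool" where
  "ribbon_of R I \<longleftrightarrow> (\<exists>n (c :: nat \<Rightarrow> cell). n \<ge> 1 \<and> R = c ` {1..n} \<and>
      (\<forall>i \<in> {1..<n}.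
          c (i + 1) = (fst (c i), snd (c i) + 1)
        \<or> (fst (c i) = fst (c (i + 1)) + 1 \<and> snd (c (i + 1)) = snd (c i))) \<and>
      I = {i \<in> {1..<n}. fst (c i) = fst (c (i + 1)) + 1 \<and> snd (c (i + 1)) = snd (c i)})"

definition rim :: "nat list \<Rightarrow> cell set" where
  "rim lam = {(i, j) \<in> young lam.
      \<not> ((i, j + 1) \<in> young lam \<and> (i + 1, j) \<in> young lam \<and> (i + 1, j + 1) \<in> young lam)}"

definition lamI :: "nat set \<Rightarrow> nat list" where
  "lamI I = (THE lam. is_partition lam \<and> part lam 1 = part lam 2 \<and> ribbon_of (rim lam) I)"

definition muI :: "nat set \<Rightarrow> nat list" where
  "muI I = (THE mu. is_partition mu \<and> young mu \<subseteq> young (lamI I)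
              \<and> young (lamI I) - young mu = rim (lamI I))"

definition sI :: "nat set \<Rightarrow> nat" where
  "sI I = part (lamI I) 1 - 1"

definition NN_coeff :: "nat set \<Rightarrow> nat \<Rightarrow> nat" where
  "NN_coeff I j = (\<Sum>D \<in> {D \<in> excited_diagrams (lamI I) (muI I).
                        card {c \<in> D. fst c = 1} = sI I - j}.
                     \<Prod>c \<in> {c \<in> D. fst c \<noteq> 1}. hook (lamI I) c)"

definition log_concave :: "(nat \<Rightarrow> nat) \<Rightarrow> nat \<Rightarrow> bool" where
  "log_concave x m \<longleftrightarrow> (\<forall>k. 0 < k \<and> k < m \<longrightarrow> x (k - 1) * x (k + 1) \<le> (x k)\<^sup>2)"

end

theory Submission
  imports Defs Complex_Main
begin


lemma part3: "part [x,y,z] i = (if i=1 then x else if i=2 then y else if i=3 then z else 0)"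
  by (auto simp: part_def numeral_eq_Suc nth_Cons split: nat.split)

lemma young3: "young [x,y,z] = {(i,j). 1\<le>j \<and> (i=1 \<and> j\<le>x \<or> i=2 \<and> j \<le> y \<or> i=3 \<and> j \<le> z)}"
  by (auto simp: young_def part3 split: if_splits)

lemma rim3:
  assumes "1 \<le> a" "a \<le> L"
  shows "rim [L,L,a] = {(i,j). (i=3 \<and> 1 \<le> j \<and> j \<le> a) \<or> (i=2 \<and> a \<le> j \<and> j \<le> L) \<or> (i=1 \<and> j = L)}"
  using assms by (auto simp: rim_def young3)

lemma ribbon_ex:
  assumes "0 < a" "a < b"
  shows "ribbon_of (rim [b-1,b-1,a]) {a,b}"
proof -
  define c where "c = (\<lambda>k::nat. if k \<le> a then (3::nat,k) else if k \<le> b then (2,k-1) else (1,b-1))"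
  have R: "rim [b-1,b-1,a] = c ` {1..b+1}"
  proof
    show "c ` {1..b+1} \<subseteq> rim [b-1,b-1,a]" using assms by (auto simp: rim3 c_def)
    show "rim [b-1,b-1,a] \<subseteq> c ` {1..b+1}"
    proof
      fix x assume "x \<in> rim [b-1,b-1,a]"
      then obtain i j where x: "x = (i,j)" and h: "(i=3 \<and> 1 \<le> j \<and> j \<le> a) \<or> (i=2 \<and> a \<le> j \<and> j \<le> b-1) \<or> (i=1 \<and> j = b-1)"
        using assms by (auto simp: rim3)
      from h show "x \<in> c ` {1..b+1}"
      proof (elim disjE)
        assume "i=3 \<and> 1 \<le> j \<and> j \<le> a" then show ?thesis using assms x by (intro image_eqI[of _ _ j]) (auto simp: c_def)
      next
        assume "i=2 \<and> a \<le> j \<and> j \<le> b-1" then show ?thesis using assms x by (intro image_eqI[of _ _ "j+1"]) (auto simp: c_def)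
      next
        assume "i=1 \<and> j = b-1" then show ?thesis using assms x by (intro image_eqI[of _ _ "b+1"]) (auto simp: c_def)
      qed
    qed
  qed
  show ?thesis unfolding ribbon_of_def
    apply (rule exI[of _ "b+1"], rule exI[of _ c])
    using assms R by (auto simp: c_def)
qed



lemma right_run:
  fixes k :: nat
  assumes "\<forall>i\<in>{k0..<k1}. c (i+1) = (fst (c i), snd (c i)+1)"
  shows "k0 \<le> k \<Longrightarrow> k \<le> k1 \<Longrightarrow> c k = (fst (c k0), snd (c k0) + (k - k0))"
proof (induction k)
  case 0 then show ?case by simp
next
  case (Suc k)
  show ?case
  proof (cases "k0 = Suc k")
    case True then show ?thesis by simp
  next
    case False
    then have "k0 \<le> k" "k < k1" using Suc by auto
    then have "c (Suc k) = (fst (c k), snd (c k)+1)" using assms by auto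
    then show ?thesis using Suc.IH \<open>k0 \<le> k\<close> \<open>k < k1\<close> by (simp add: Suc_diff_le)
  qed
qed

lemma part_pos:
  assumes "is_partition lam" "1 \<le> i" "i \<le> length lam"
  shows "part lam i \<ge> 1"
proof -
  have "lam ! (i-1) \<in> set lam" using assms by auto
  then have "lam ! (i-1) \<noteq> 0" using assms(1) unfolding is_partition_def by metis
  then show ?thesis using assms by (simp add: part_def)
qed

lemma part_mono:
  assumes "is_partition lam" "1 \<le> i" "i \<le> i'"
  shows "part lam i' \<le> part lam i"
proof (cases "i' \<le> length lam")
  case True
  show ?thesis
  proof (cases "i = i'")
    case False
    then have "lam ! (i'-1) \<le> lam ! (i-1)"
      using assms True sorted_wrt_nth_less[of "(\<ge>)" lam "i-1" "i'-1"] unfolding is_partition_def by auto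
    then show ?thesis using assms True by (simp add: part_def)
  qed simp
next
  case False then show ?thesis by (simp add: part_def)
qed

lemma young_row: "(i,j) \<in> young lam \<Longrightarrow> 1 \<le> i \<and> i \<le> length lam \<and> 1 \<le> j"
  by (auto simp: young_def part_def split: if_splits)

lemma rim_last:
  assumes "is_partition lam" "1 \<le> i" "i \<le> length lam"
  shows "(i, part lam i) \<in> rim lam"
  using part_pos[OF assms] assms(2) by (auto simp: rim_def young_def)

lemma lam_unique:
  assumes ab: "0<a" "a<b" and P: "is_partition lam" and P12: "part lam 1 = part lam 2"
    and Rb: "ribbon_of (rim lam) {a,b}"
  shows "lam = [b-1,b-1,a]"
proof -
  obtain n c where n1: "n \<ge> 1" and R: "rim lam = c ` {1..n}"
    and st: "\<forall>i \<in> {1..<n}. c (i + 1) = (fst (c i), snd (c i) + 1)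
        \<or> (fst (c i) = fst (c (i + 1)) + 1 \<and> snd (c (i + 1)) = snd (c i))"
    and I: "{a,b} = {i \<in> {1..<n}. fst (c i) = fst (c (i + 1)) + 1 \<and> snd (c (i + 1)) = snd (c i)}"
    using Rb unfolding ribbon_of_def by blast
  have bn: "b < n" and upa: "fst (c a) = fst (c (a + 1)) + 1 \<and> snd (c (a + 1)) = snd (c a)"
    and upb: "fst (c b) = fst (c (b + 1)) + 1 \<and> snd (c (b + 1)) = snd (c b)"
    using I by (auto simp: set_eq_iff)
  have right: "c (i + 1) = (fst (c i), snd (c i) + 1)" if "1 \<le> i" "i < n" "i \<noteq> a" "i \<noteq> b" for i
  proof -
    have "i \<notin> {a,b}" using that by auto
    then have "\<not> (fst (c i) = fst (c (i + 1)) + 1 \<and> snd (c (i + 1)) = snd (c i))"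
      using I that by auto
    then show ?thesis using st that by auto
  qed
  define r0 where "r0 = fst (c 1)"
  define q where "q = snd (c 1)"
  define r1 where "r1 = fst (c (a+1))"
  define s1 where "s1 = snd (c (a+1))"
  define r2 where "r2 = fst (c (b+1))"
  define s2 where "s2 = snd (c (b+1))"
  have seg1: "c k = (r0, q + (k - 1))" if "1 \<le> k" "k \<le> a" for k
  proof -
    have "\<forall>i\<in>{1..<a}. c (i+1) = (fst (c i), snd (c i)+1)" using ab bn by (intro ballI right) auto
    from right_run[OF this, of k] that show ?thesis unfolding r0_def q_def by simp
  qed
  have seg2: "c k = (r1, s1 + (k - (a+1)))" if "a+1 \<le> k" "k \<le> b" for k
  proof -
    have "\<forall>i\<in>{a+1..<b}. c (i+1) = (fst (c i), snd (c i)+1)" using ab bn by (intro ballI right) auto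
    from right_run[OF this, of k] that show ?thesis unfolding r1_def s1_def by simp
  qed
  have seg3: "c k = (r2, s2 + (k - (b+1)))" if "b+1 \<le> k" "k \<le> n" for k
  proof -
    have "\<forall>i\<in>{b+1..<n}. c (i+1) = (fst (c i), snd (c i)+1)" using ab bn by (intro ballI right) auto
    from right_run[OF this, of k] that show ?thesis unfolding r2_def s2_def by simp
  qed
  have r01: "r0 = r1 + 1" and s1q: "s1 = q + (a - 1)"
    using upa seg1[of a] ab unfolding r1_def s1_def by auto
  have r12: "r1 = r2 + 1" and s21: "s2 = s1 + (b - (a+1))"
    using upb seg2[of b] ab unfolding r2_def s2_def by auto
  have mem: "(i,j) \<in> rim lam \<longleftrightarrow> (i = r0 \<and> q \<le> j \<and> j \<le> s1) \<or> (i = r1 \<and> s1 \<le> j \<and> j \<le> s2)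
             \<or> (i = r2 \<and> s2 \<le> j \<and> j \<le> s2 + (n - (b+1)))" for i j
  proof
    assume "(i,j) \<in> rim lam"
    then obtain k where k: "1 \<le> k" "k \<le> n" "c k = (i,j)" using R by auto
    consider "k \<le> a" | "a+1 \<le> k" "k \<le> b" | "b+1 \<le> k" by linarith
    then show "(i = r0 \<and> q \<le> j \<and> j \<le> s1) \<or> (i = r1 \<and> s1 \<le> j \<and> j \<le> s2)
             \<or> (i = r2 \<and> s2 \<le> j \<and> j \<le> s2 + (n - (b+1)))"
    proof cases
      case 1 then show ?thesis using seg1[of k] k s1q by auto
    next
      case 2 then show ?thesis using seg2[of k] k s21 by auto
    next
      case 3 then show ?thesis using seg3[of k] k by auto
    qed
  next
    assume "(i = r0 \<and> q \<le> j \<and> j \<le> s1) \<or> (i = r1 \<and> s1 \<le> j \<and> j \<le> s2)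
             \<or> (i = r2 \<and> s2 \<le> j \<and> j \<le> s2 + (n - (b+1)))"
    then show "(i,j) \<in> rim lam"
    proof (elim disjE)
      assume h: "i = r0 \<and> q \<le> j \<and> j \<le> s1"
      then have "c (j - q + 1) = (i,j)" using seg1[of "j-q+1"] s1q ab by auto
      moreover have "j - q + 1 \<in> {1..n}" using h s1q ab bn by auto
      ultimately show ?thesis using R by (metis image_eqI)
    next
      assume h: "i = r1 \<and> s1 \<le> j \<and> j \<le> s2"
      then have "c (j - s1 + (a+1)) = (i,j)" using seg2[of "j - s1 + (a+1)"] s21 ab by auto
      moreover have "j - s1 + (a+1) \<in> {1..n}" using h s21 ab bn by auto
      ultimately show ?thesis using R by (metis image_eqI)
    next
      assume h: "i = r2 \<and> s2 \<le> j \<and> j \<le> s2 + (n - (b+1))"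
      then have "c (j - s2 + (b+1)) = (i,j)" using seg3[of "j - s2 + (b+1)"] bn by auto
      moreover have "j - s2 + (b+1) \<in> {1..n}" using h bn by auto
      ultimately show ?thesis using R by (metis image_eqI)
    qed
  qed
  have rimY: "rim lam \<subseteq> young lam" by (auto simp: rim_def)
  have "(r2, s2) \<in> rim lam" using mem[of r2 s2] by simp
  then have r2g: "r2 \<ge> 1" using rimY young_row by blast
  have "(r0, q) \<in> rim lam" using mem[of r0 q] s1q by simp
  then have r0l: "r0 \<le> length lam" using rimY young_row by blast
  have "(1, part lam 1) \<in> rim lam" using rim_last[OF P, of 1] r0l r01 by auto
  then have "1 = r0 \<or> 1 = r1 \<or> 1 = r2" using mem[of 1 "part lam 1"] by blast
  then have "r2 = 1" using r01 r12 r2g by linarith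
  have len: "length lam = 3"
  proof (rule ccontr)
    assume "length lam \<noteq> 3"
    then have "4 \<le> length lam" using r0l r01 r12 \<open>r2 = 1\<close> by auto
    then have "(4, part lam 4) \<in> rim lam" using rim_last[OF P, of 4] by auto
    then have "4 = r0 \<or> 4 = r1 \<or> 4 = r2" using mem[of 4 "part lam 4"] by blast
    then show False using r01 r12 \<open>r2 = 1\<close> by linarith
  qed
  have "lam = [lam!0, lam!1, lam!2]"
    using len by (intro nth_equalityI) (auto simp: less_Suc_eq numeral_eq_Suc nth_Cons split: nat.split)
  then obtain x y z where lxyz: "lam = [x,y,z]" by blast
  have xy: "x = y" using P12 by (simp add: lxyz part3)
  have z1: "1 \<le> z" using part_pos[OF P, of 3] len by (simp add: lxyz part3)
  have zy: "z \<le> y" using part_mono[OF P, of 2 3] by (simp add: lxyz part3)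
  have rimE: "rim lam = {(i,j). (i=3 \<and> 1 \<le> j \<and> j \<le> z) \<or> (i=2 \<and> z \<le> j \<and> j \<le> y) \<or> (i=1 \<and> j = y)}"
    using rim3[OF z1 zy] xy lxyz by simp
  have rr: "r0 = 3" "r1 = 2" using r01 r12 \<open>r2 = 1\<close> by auto
  have s1v: "s1 = q + (a - 1)" by (rule s1q)
  have r3: "(3,j) \<in> rim lam \<longleftrightarrow> 1 \<le> j \<and> j \<le> z" for j using rimE by simp
  have m3: "(3,j) \<in> rim lam \<longleftrightarrow> q \<le> j \<and> j \<le> s1" for j using mem[of 3 j] rr r12 \<open>r2 = 1\<close> by simp
  have r2': "(2,j) \<in> rim lam \<longleftrightarrow> z \<le> j \<and> j \<le> y" for j using rimE by simp
  have m2: "(2,j) \<in> rim lam \<longleftrightarrow> s1 \<le> j \<and> j \<le> s2" for j using mem[of 2 j] rr r12 \<open>r2 = 1\<close> by simp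
  have row3: "(1 \<le> j \<and> j \<le> z) \<longleftrightarrow> (q \<le> j \<and> j \<le> s1)" for j using r3 m3 by blast
  have row2: "(z \<le> j \<and> j \<le> y) \<longleftrightarrow> (s1 \<le> j \<and> j \<le> s2)" for j using r2' m2 by blast
  have "q \<le> 1" using row3[of 1] z1 by simp
  moreover have "1 \<le> q" using row3[of q] s1v by simp
  ultimately have "q = 1" by simp
  have "z \<le> s1" using row3[of z] z1 by simp
  moreover have "s1 \<le> z" using row3[of s1] s1v \<open>q = 1\<close> by simp
  ultimately have "z = s1" by simp
  then have "z = a" using s1v \<open>q = 1\<close> ab by simp
  have "y \<le> s2" using row2[of y] zy by simp
  moreover have "s2 \<le> y" using row2[of s2] s21 \<open>z = s1\<close> by simp
  ultimately have "y = s2" by simp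
  then have "y = b - 1" using s21 s1v \<open>q = 1\<close> ab by simp
  then show ?thesis using lxyz xy \<open>z = a\<close> by simp
qed

lemma lamI_eq:
  assumes "0<a" "a<b"
  shows "lamI {a,b} = [b-1,b-1,a]"
  unfolding lamI_def
proof (rule the_equality)
  show "is_partition [b-1,b-1,a] \<and> part [b-1,b-1,a] 1 = part [b-1,b-1,a] 2 \<and> ribbon_of (rim [b-1,b-1,a]) {a,b}"
    using assms ribbon_ex[OF assms] by (auto simp: is_partition_def part3)
  show "\<And>lam. is_partition lam \<and> part lam 1 = part lam 2 \<and> ribbon_of (rim lam) {a, b} \<Longrightarrow> lam = [b - 1, b - 1, a]"
    using lam_unique[OF assms] by blast
qed



definition Dg :: "nat \<Rightarrow> nat \<Rightarrow> nat \<Rightarrow> nat \<Rightarrow> cell set" where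
  "Dg L a r m = {(i,j). (i=1 \<and> 1\<le>j \<and> j+r+1 \<le> L) \<or> (i=2 \<and> L < j+r \<and> j \<le> L)
      \<or> (i=2 \<and> 1\<le>j \<and> j+m+1 \<le> a) \<or> (i=3 \<and> a < j+m \<and> j \<le> a)}"

definition Vd :: "nat \<Rightarrow> nat \<Rightarrow> (nat \<times> nat) set" where
  "Vd L a = {(r,m). r+1 \<le> L \<and> m+1 \<le> a \<and> r + a \<le> m + L}"

lemma dg_eq_r: assumes "L = j + r + 1" "1 \<le> j" "\<not> (j+m+1 \<le> a)"
  shows "(Dg L a r m - {(1,j)}) \<union> {(1+1,j+1)} = Dg L a (r+1) m"
proof (rule set_eqI)
  fix x :: cell
  obtain p q where x: "x = (p,q)" by fastforce
  have "p = 1 \<or> p = 2 \<or> p = 3 \<or> (p \<noteq> 1 \<and> p \<noteq> 2 \<and> p \<noteq> 3)" by blast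
  then show "x \<in> (Dg L a r m - {(1,j)}) \<union> {(1+1,j+1)} \<longleftrightarrow> x \<in> Dg L a (r+1) m"
    using assms unfolding x Dg_def by (elim disjE) auto
qed

lemma dg_eq_m: assumes "a = j + m + 1" "1 \<le> j" "j + 1 + r \<le> L"
  shows "(Dg L a r m - {(2,j)}) \<union> {(2+1,j+1)} = Dg L a r (m+1)"
proof (rule set_eqI)
  fix x :: cell
  obtain p q where x: "x = (p,q)" by fastforce
  have "p = 1 \<or> p = 2 \<or> p = 3 \<or> (p \<noteq> 1 \<and> p \<noteq> 2 \<and> p \<noteq> 3)" by blast
  then show "x \<in> (Dg L a r m - {(2,j)}) \<union> {(2+1,j+1)} \<longleftrightarrow> x \<in> Dg L a r (m+1)"
    using assms unfolding x Dg_def by (elim disjE) auto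
qed

lemma step_closed:
  assumes a1: "1 \<le> a" and aL: "a \<le> L" and V: "(r,m) \<in> Vd L a"
    and st: "excite_step [L,L,a] (Dg L a r m) D'"
  shows "\<exists>r' m'. (r',m') \<in> Vd L a \<and> D' = Dg L a r' m'"
proof -
  obtain i j where ij: "(i, j) \<in> Dg L a r m" and y: "(i + 1, j + 1) \<in> young [L,L,a]"
      and n1: "(i, j + 1) \<notin> Dg L a r m" and n2: "(i + 1, j) \<notin> Dg L a r m"
      and n3: "(i + 1, j + 1) \<notin> Dg L a r m"
      and D': "D' = (Dg L a r m - {(i, j)}) \<union> {(i + 1, j + 1)}"
    using st unfolding excite_step_def by blast
  have V': "r+1 \<le> L" "m+1 \<le> a" "r + a \<le> m + L" using V by (auto simp: Vd_def)
  from ij consider "i=1" "1\<le>j" "j+r+1 \<le> L" | "i=2" "L < j+r" "j \<le> L"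
      | "i=2" "1\<le>j" "j+m+1 \<le> a" | "i=3" "a < j+m" "j \<le> a"
    unfolding Dg_def by blast
  then show ?thesis
  proof cases
    case 1
    have jv: "j + r + 1 = L" using n1 1 unfolding Dg_def by auto
    have "\<not> (j+m+1 \<le> a)" using n2 1 unfolding Dg_def by auto
    then have "(r+1, m) \<in> Vd L a" using jv V' by (auto simp: Vd_def)
    moreover have "D' = Dg L a (r+1) m"
      using D' 1 jv dg_eq_r[of L j r m a] \<open>\<not> (j+m+1 \<le> a)\<close> by simp
    ultimately show ?thesis by blast
  next
    case 2
    have "j + 1 \<le> a" using y 2 by (simp add: young3)
    moreover have "\<not> (L < j+1+r \<and> j+1 \<le> L)" using n1 2 unfolding Dg_def by auto
    ultimately show ?thesis using 2 aL by auto
  next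
    case 3
    have jv: "j + m + 1 = a" using n1 3 unfolding Dg_def by auto
    then have "(r, m+1) \<in> Vd L a" using V' 3(2) unfolding Vd_def by simp
    moreover have "D' = Dg L a r (m+1)"
    proof -
      have j1: "1 \<le> j" using 3 by simp
      have "\<not> (L < j+1+r \<and> j+1 \<le> L)" using n1 3 unfolding Dg_def by auto
      then have "j + 1 + r \<le> L" using jv aL by linarith
      then show ?thesis using D' 3 jv j1 dg_eq_m[of a j m r L] by simp
    qed
    ultimately show ?thesis by blast
  next
    case 4
    then show ?thesis using y by (simp add: young3)
  qed
qed

lemma step_r:
  assumes "(r,m) \<in> Vd L a" "(r+1,m) \<in> Vd L a" "a \<le> L"
  shows "excite_step [L,L,a] (Dg L a r m) (Dg L a (r+1) m)"
  unfolding excite_step_def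
proof (intro exI conjI)
  let ?j = "L - r - 1"
  show "(1, ?j) \<in> Dg L a r m" using assms by (auto simp: Dg_def Vd_def)
  show "(1+1, ?j+1) \<in> young [L,L,a]" using assms by (auto simp: young3 Vd_def)
  show "(1, ?j+1) \<notin> Dg L a r m" using assms by (auto simp: Dg_def Vd_def)
  show "(1+1, ?j) \<notin> Dg L a r m" using assms by (auto simp: Dg_def Vd_def)
  show "(1+1, ?j+1) \<notin> Dg L a r m" using assms by (auto simp: Dg_def Vd_def)
  show "Dg L a (r+1) m = (Dg L a r m - {(1, ?j)}) \<union> {(1+1, ?j+1)}"
  proof -
    have "(Dg L a r m - {(1,?j)}) \<union> {(1+1,?j+1)} = Dg L a (r+1) m"
      by (rule dg_eq_r) (use assms in \<open>auto simp: Vd_def\<close>)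
    then show ?thesis by (rule sym)
  qed
qed

lemma step_m:
  assumes "(r,m) \<in> Vd L a" "(r,m+1) \<in> Vd L a" "a \<le> L"
  shows "excite_step [L,L,a] (Dg L a r m) (Dg L a r (m+1))"
  unfolding excite_step_def
proof (intro exI conjI)
  let ?j = "a - m - 1"
  show "(2, ?j) \<in> Dg L a r m" using assms by (auto simp: Dg_def Vd_def)
  show "(2+1, ?j+1) \<in> young [L,L,a]" using assms by (auto simp: young3 Vd_def)
  show "(2, ?j+1) \<notin> Dg L a r m" using assms by (auto simp: Dg_def Vd_def)
  show "(2+1, ?j) \<notin> Dg L a r m" using assms by (auto simp: Dg_def Vd_def)
  show "(2+1, ?j+1) \<notin> Dg L a r m" using assms by (auto simp: Dg_def Vd_def)
  show "Dg L a r (m+1) = (Dg L a r m - {(2, ?j)}) \<union> {(2+1, ?j+1)}"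
  proof -
    have "(Dg L a r m - {(2,?j)}) \<union> {(2+1,?j+1)} = Dg L a r (m+1)"
      by (rule dg_eq_m) (use assms in \<open>auto simp: Vd_def\<close>)
    then show ?thesis by (rule sym)
  qed
qed

lemma excited_eq:
  assumes a1: "1 \<le> a" and aL: "a \<le> L"
  shows "{D. (excite_step [L,L,a])\<^sup>*\<^sup>* (Dg L a 0 0) D} = (\<lambda>(r,m). Dg L a r m) ` Vd L a"
proof
  show "{D. (excite_step [L,L,a])\<^sup>*\<^sup>* (Dg L a 0 0) D} \<subseteq> (\<lambda>(r,m). Dg L a r m) ` Vd L a"
  proof
    fix D assume "D \<in> {D. (excite_step [L,L,a])\<^sup>*\<^sup>* (Dg L a 0 0) D}"
    then have "(excite_step [L,L,a])\<^sup>*\<^sup>* (Dg L a 0 0) D" by simp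
    then show "D \<in> (\<lambda>(r,m). Dg L a r m) ` Vd L a"
    proof (induction rule: rtranclp_induct)
      case base
      have "(0,0) \<in> Vd L a" using assms by (auto simp: Vd_def)
      then show ?case by force
    next
      case (step y z)
      from step(3) obtain r m where "(r,m) \<in> Vd L a" "y = Dg L a r m" by auto
      then show ?case using step_closed[OF a1 aL, of r m z] step(2) by force
    qed
  qed
  show "(\<lambda>(r,m). Dg L a r m) ` Vd L a \<subseteq> {D. (excite_step [L,L,a])\<^sup>*\<^sup>* (Dg L a 0 0) D}"
  proof
    fix D assume "D \<in> (\<lambda>(r,m). Dg L a r m) ` Vd L a"
    then obtain r m where V: "(r,m) \<in> Vd L a" and D: "D = Dg L a r m" by auto
    have m: "(excite_step [L,L,a])\<^sup>*\<^sup>* (Dg L a 0 0) (Dg L a 0 k)" if "k \<le> m" for k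
      using that
    proof (induction k)
      case 0 then show ?case by simp
    next
      case (Suc k)
      have "(0,k) \<in> Vd L a" "(0,k+1) \<in> Vd L a" using V Suc.prems aL by (auto simp: Vd_def)
      then have "excite_step [L,L,a] (Dg L a 0 k) (Dg L a 0 (k+1))" using step_m[of 0 k L a] aL by blast
      moreover have "(excite_step [L,L,a])\<^sup>*\<^sup>* (Dg L a 0 0) (Dg L a 0 k)" using Suc by simp
      ultimately show ?case by (simp add: rtranclp.rtrancl_into_rtrancl)
    qed
    have r: "(excite_step [L,L,a])\<^sup>*\<^sup>* (Dg L a 0 0) (Dg L a k m)" if "k \<le> r" for k
      using that
    proof (induction k)
      case 0 then show ?case using m by simp
    next
      case (Suc k)
      have "(k,m) \<in> Vd L a" "(k+1,m) \<in> Vd L a" using V Suc.prems aL by (auto simp: Vd_def)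
      then have "excite_step [L,L,a] (Dg L a k m) (Dg L a (k+1) m)" using step_r[of k m L a] aL by blast
      moreover have "(excite_step [L,L,a])\<^sup>*\<^sup>* (Dg L a 0 0) (Dg L a k m)" using Suc by simp
      ultimately show ?case by (simp add: rtranclp.rtrancl_into_rtrancl)
    qed
    show "D \<in> {D. (excite_step [L,L,a])\<^sup>*\<^sup>* (Dg L a 0 0) D}" using r[of r] D by simp
  qed
qed



lemma young_char: "(i,j) \<in> young lam \<longleftrightarrow> 1 \<le> i \<and> 1 \<le> j \<and> j \<le> part lam i"
  by (simp add: young_def)

lemma young_inj:
  assumes P1: "is_partition m1" and P2: "is_partition m2" and Y: "young m1 = young m2"
  shows "m1 = m2"
proof -
  have pe: "part m1 i = part m2 i" if "1 \<le> i" for i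
  proof (rule ccontr)
    assume ne: "part m1 i \<noteq> part m2 i"
    show False
    proof (cases "part m1 i < part m2 i")
      case True
      then have "(i, part m2 i) \<in> young m2" using that by (simp add: young_char)
      then have "(i, part m2 i) \<in> young m1" using Y by simp
      then show False using True by (simp add: young_char)
    next
      case False
      then have "part m2 i < part m1 i" using ne by simp
      then have "(i, part m1 i) \<in> young m1" using that by (simp add: young_char)
      then have "(i, part m1 i) \<in> young m2" using Y by simp
      then show False using \<open>part m2 i < part m1 i\<close> by (simp add: young_char)
    qed
  qed
  have len: "length m1 = length m2"
  proof (rule ccontr)
    assume "length m1 \<noteq> length m2"
    then consider "length m1 < length m2" | "length m2 < length m1" by linarith
    then show False
    proof cases
      case 1
      then have "part m2 (length m2) \<ge> 1" using part_pos[OF P2, of "length m2"] by simp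
      moreover have "part m1 (length m2) = 0" using 1 by (simp add: part_def)
      ultimately show False using pe[of "length m2"] 1 by simp
    next
      case 2
      then have "part m1 (length m1) \<ge> 1" using part_pos[OF P1, of "length m1"] by simp
      moreover have "part m2 (length m1) = 0" using 2 by (simp add: part_def)
      ultimately show False using pe[of "length m1"] 2 by simp
    qed
  qed
  show ?thesis
  proof (rule nth_equalityI[OF len])
    fix k assume "k < length m1"
    then show "m1 ! k = m2 ! k" using pe[of "k+1"] len by (simp add: part_def)
  qed
qed

lemma young_minus_rim:
  assumes "1 \<le> a" "a \<le> L"
  shows "young [L,L,a] - rim [L,L,a] = Dg L a 0 0"
proof (rule set_eqI)
  fix x :: cell
  obtain p q where x: "x = (p,q)" by fastforce
  have "p = 1 \<or> p = 2 \<or> p = 3 \<or> (p \<noteq> 1 \<and> p \<noteq> 2 \<and> p \<noteq> 3)" by blast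
  then show "x \<in> young [L,L,a] - rim [L,L,a] \<longleftrightarrow> x \<in> Dg L a 0 0"
    using assms unfolding x Dg_def young3 rim3[OF assms] by (elim disjE) auto
qed

lemma part1: "part [x] i = (if i=1 then x else 0)"
  by (auto simp: part_def)
lemma part2: "part [x,y] i = (if i=1 then x else if i=2 then y else 0)"
  by (auto simp: part_def numeral_eq_Suc nth_Cons split: nat.split)

lemma mu0_young:
  assumes "0 < a" "a < b"
  defines "mu0 \<equiv> (if b = 2 then [] else if a = 1 then [b-2] else [b-2,a-1])"
  shows "is_partition mu0 \<and> young mu0 = Dg (b-1) a 0 0"
proof -
  have "young mu0 = Dg (b-1) a 0 0"
  proof (rule set_eqI)
    fix x :: cell
    obtain p q where x: "x = (p,q)" by fastforce
    have "p = 1 \<or> p = 2 \<or> p = 3 \<or> (p \<noteq> 1 \<and> p \<noteq> 2 \<and> p \<noteq> 3)" by blast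
    then show "x \<in> young mu0 \<longleftrightarrow> x \<in> Dg (b-1) a 0 0"
      using assms unfolding x Dg_def mu0_def young_char by (elim disjE) (auto simp: part_def nth_Cons split: nat.split)
  qed
  moreover have "is_partition mu0" using assms unfolding mu0_def is_partition_def by auto
  ultimately show ?thesis by simp
qed

lemma muI_young:
  assumes "0 < a" "a < b"
  shows "young (muI {a,b}) = Dg (b-1) a 0 0"
proof -
  define mu0 where "mu0 = (if b = 2 then [] else if a = 1 then [b-2] else [b-2,a-1])"
  have m0: "is_partition mu0" "young mu0 = Dg (b-1) a 0 0" using mu0_young[OF assms] unfolding mu0_def by auto
  have ym: "young [b-1,b-1,a] - rim [b-1,b-1,a] = Dg (b-1) a 0 0"
    using young_minus_rim[of a "b-1"] assms by simp
  have rimY: "rim [b-1,b-1,a] \<subseteq> young [b-1,b-1,a]" by (auto simp: rim_def)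
  have "muI {a,b} = mu0"
    unfolding muI_def lamI_eq[OF assms]
  proof (rule the_equality)
    show "is_partition mu0 \<and> young mu0 \<subseteq> young [b-1,b-1,a] \<and> young [b-1,b-1,a] - young mu0 = rim [b-1,b-1,a]"
      using m0 ym rimY by auto
    fix mu assume h: "is_partition mu \<and> young mu \<subseteq> young [b-1,b-1,a] \<and> young [b-1,b-1,a] - young mu = rim [b-1,b-1,a]"
    then have "young mu = young [b-1,b-1,a] - rim [b-1,b-1,a]" by auto
    then have "young mu = young mu0" using ym m0 by simp
    then show "mu = mu0" using young_inj h m0 by blast
  qed
  then show ?thesis using m0 by simp
qed



definition FF :: "nat \<Rightarrow> nat \<Rightarrow> nat \<Rightarrow> nat" where
  "FF L a r = (\<Prod>j\<in>{j. L<j+r \<and> j\<le>L}. hook [L,L,a] (2,j))"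

definition AA :: "nat \<Rightarrow> nat \<Rightarrow> nat \<Rightarrow> nat" where
  "AA L a m = (\<Prod>j\<in>{j. 1\<le>j \<and> j+m+1\<le>a}. hook [L,L,a] (2,j)) * (\<Prod>j\<in>{j. a<j+m \<and> j\<le>a}. hook [L,L,a] (3,j))"

lemma row1_set:
  "{c \<in> Dg L a r m. fst c = 1} = (\<lambda>j. (1,j)) ` {1..L-(r+1)}"
  by (auto simp: Dg_def)

lemma row1_card: "card {c \<in> Dg L a r m. fst c = 1} = L-(r+1)"
  unfolding row1_set by (subst card_image) (auto simp: inj_on_def)

lemma nonrow1_set:
  "{c \<in> Dg L a r m. fst c \<noteq> 1} = ((\<lambda>j. (2::nat,j)) ` {j. L<j+r \<and> j\<le>L}) \<union> ((\<lambda>j. (2,j)) ` {j. 1\<le>j \<and> j+m+1\<le>a})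
     \<union> ((\<lambda>j. (3,j)) ` {j. a<j+m \<and> j\<le>a})"
  by (auto simp: Dg_def)

lemma prod_Dg:
  assumes "(r,m) \<in> Vd L a"
  shows "(\<Prod>c\<in>{c \<in> Dg L a r m. fst c \<noteq> 1}. hook [L,L,a] c) = FF L a r * AA L a m"
proof -
  let ?S1 = "{j. L<j+r \<and> j\<le>L}" and ?S2 = "{j. 1\<le>j \<and> j+m+1\<le>a}" and ?S3 = "{j. a<j+m \<and> j\<le>a}"
  have f1: "finite ?S1" by (rule finite_subset[of _ "{..L}"]) auto
  have f2: "finite ?S2" by (rule finite_subset[of _ "{..a}"]) auto
  have f3: "finite ?S3" by (rule finite_subset[of _ "{..a}"]) auto
  have d12: "?S1 \<inter> ?S2 = {}" using assms by (auto simp: Vd_def)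
  have i2: "inj (\<lambda>j. (2::nat, j::nat))" "inj (\<lambda>j. (3::nat, j::nat))" by (auto simp: inj_def)
  have "(\<Prod>c\<in>{c \<in> Dg L a r m. fst c \<noteq> 1}. hook [L,L,a] c)
     = (\<Prod>c\<in>((\<lambda>j. (2,j)) ` ?S1 \<union> (\<lambda>j. (2,j)) ` ?S2) \<union> (\<lambda>j. (3,j)) ` ?S3. hook [L,L,a] c)"
    by (simp only: nonrow1_set)
  also have "\<dots> = (\<Prod>c\<in>(\<lambda>j. (2,j)) ` ?S1 \<union> (\<lambda>j. (2,j)) ` ?S2. hook [L,L,a] c) * (\<Prod>c\<in>(\<lambda>j. (3,j)) ` ?S3. hook [L,L,a] c)"
    by (rule prod.union_disjoint) (use f1 f2 f3 in auto)
  also have "(\<Prod>c\<in>(\<lambda>j. (2,j)) ` ?S1 \<union> (\<lambda>j. (2,j)) ` ?S2. hook [L,L,a] c)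
      = (\<Prod>c\<in>(\<lambda>j. (2,j)) ` ?S1. hook [L,L,a] c) * (\<Prod>c\<in>(\<lambda>j. (2,j)) ` ?S2. hook [L,L,a] c)"
    by (rule prod.union_disjoint) (use f1 f2 d12 in auto)
  also have "(\<Prod>c\<in>(\<lambda>j. (2,j)) ` ?S1. hook [L,L,a] c) = FF L a r"
    unfolding FF_def by (subst prod.reindex) (auto simp: inj_on_def)
  also have "(\<Prod>c\<in>(\<lambda>j. (2,j)) ` ?S2. hook [L,L,a] c) = (\<Prod>j\<in>?S2. hook [L,L,a] (2,j))"
    by (subst prod.reindex) (auto simp: inj_on_def)
  also have "(\<Prod>c\<in>(\<lambda>j. (3,j)) ` ?S3. hook [L,L,a] c) = (\<Prod>j\<in>?S3. hook [L,L,a] (3,j))"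
    by (subst prod.reindex) (auto simp: inj_on_def)
  finally show ?thesis by (simp add: AA_def mult.assoc)
qed

lemma Dg_inj_m:
  assumes "m1+1 \<le> a" "m2+1 \<le> a" "Dg L a k m1 = Dg L a k m2"
  shows "m1 = m2"
proof (rule ccontr)
  assume "m1 \<noteq> m2"
  then consider "m1 < m2" | "m2 < m1" by linarith
  then show False
  proof cases
    case 1
    have "(3, a-m1) \<in> Dg L a k m2" using 1 assms(1,2) by (auto simp: Dg_def)
    moreover have "(3, a-m1) \<notin> Dg L a k m1" using assms(1,2) by (auto simp: Dg_def)
    ultimately show False using assms by simp
  next
    case 2
    have "(3, a-m2) \<in> Dg L a k m1" using 2 assms(1,2) by (auto simp: Dg_def)
    moreover have "(3, a-m2) \<notin> Dg L a k m2" using assms(1,2) by (auto simp: Dg_def)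
    ultimately show False using assms by simp
  qed
qed

lemma NN_formula:
  assumes ab: "0 < a" "a < b" and k: "k+1 \<le> b-1"
  shows "NN_coeff {a,b} k = FF (b-1) a k * (\<Sum>m\<in>{m. m+1 \<le> a \<and> k+a \<le> m+(b-1)}. AA (b-1) a m)"
proof -
  define L where "L = b-1"
  have a1: "1 \<le> a" and aL: "a \<le> L" using ab by (auto simp: L_def)
  have E: "excited_diagrams (lamI {a,b}) (muI {a,b}) = (\<lambda>(r,m). Dg L a r m) ` Vd L a"
    unfolding excited_diagrams_def lamI_eq[OF ab] muI_young[OF ab] L_def[symmetric]
    using excited_eq[OF a1 aL] by simp
  have s: "sI {a,b} = L - 1" unfolding sI_def lamI_eq[OF ab] by (simp add: part3 L_def)
  define M where "M = {m. m+1 \<le> a \<and> k+a \<le> m+L}"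
  have filt: "{D \<in> (\<lambda>(r,m). Dg L a r m) ` Vd L a. card {c \<in> D. fst c = 1} = L - 1 - k} = (\<lambda>m. Dg L a k m) ` M"
  proof
    show "{D \<in> (\<lambda>(r,m). Dg L a r m) ` Vd L a. card {c \<in> D. fst c = 1} = L - 1 - k} \<subseteq> (\<lambda>m. Dg L a k m) ` M"
    proof
      fix D assume "D \<in> {D \<in> (\<lambda>(r,m). Dg L a r m) ` Vd L a. card {c \<in> D. fst c = 1} = L - 1 - k}"
      then obtain r m where V: "(r,m) \<in> Vd L a" and D: "D = Dg L a r m" and c: "card {c \<in> D. fst c = 1} = L - 1 - k"
        by auto
      have "L - (r+1) = L - 1 - k" using c D row1_card by simp
      moreover have "r + 1 \<le> L" using V by (simp add: Vd_def)
      ultimately have "r = k" using k unfolding L_def by linarith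
      then show "D \<in> (\<lambda>m. Dg L a k m) ` M" using V D by (auto simp: M_def Vd_def)
    qed
    show "(\<lambda>m. Dg L a k m) ` M \<subseteq> {D \<in> (\<lambda>(r,m). Dg L a r m) ` Vd L a. card {c \<in> D. fst c = 1} = L - 1 - k}"
    proof
      fix D assume "D \<in> (\<lambda>m. Dg L a k m) ` M"
      then obtain m where m: "m \<in> M" and D: "D = Dg L a k m" by auto
      have V: "(k,m) \<in> Vd L a" using m k by (auto simp: M_def Vd_def L_def)
      have "card {c \<in> D. fst c = 1} = L - 1 - k" using D row1_card by simp
      then show "D \<in> {D \<in> (\<lambda>(r,m). Dg L a r m) ` Vd L a. card {c \<in> D. fst c = 1} = L - 1 - k}"
        using V D by force
    qed
  qed
  have inj: "inj_on (\<lambda>m. Dg L a k m) M"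
    by (rule inj_onI) (use Dg_inj_m in \<open>auto simp: M_def\<close>)
  have "NN_coeff {a,b} k = (\<Sum>D\<in>(\<lambda>m. Dg L a k m) ` M. \<Prod>c\<in>{c \<in> D. fst c \<noteq> 1}. hook [L,L,a] c)"
    unfolding NN_coeff_def E s filt[symmetric] by (simp add: lamI_eq[OF ab] L_def)
  also have "\<dots> = (\<Sum>m\<in>M. \<Prod>c\<in>{c \<in> Dg L a k m. fst c \<noteq> 1}. hook [L,L,a] c)"
    by (subst sum.reindex[OF inj]) simp
  also have "\<dots> = (\<Sum>m\<in>M. FF L a k * AA L a m)"
  proof (rule sum.cong)
    fix m assume "m \<in> M"
    then have "(k,m) \<in> Vd L a" using k by (auto simp: M_def Vd_def L_def)
    then show "(\<Prod>c\<in>{c \<in> Dg L a k m. fst c \<noteq> 1}. hook [L,L,a] c) = FF L a k * AA L a m"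
      by (rule prod_Dg)
  qed simp
  also have "\<dots> = FF L a k * (\<Sum>m\<in>M. AA L a m)" by (simp add: sum_distrib_left)
  finally show ?thesis unfolding M_def L_def .
qed



lemma hook2:
  assumes "1 \<le> j" "j \<le> L" "a \<le> L"
  shows "hook [L,L,a] (2,j) = L + 1 - j + (if j \<le> a then 1 else 0)"
proof -
  have S: "{c' \<in> young [L,L,a]. (fst c' = fst (2::nat,j) \<and> snd c' \<ge> snd (2::nat,j)) \<or> (snd c' = snd (2::nat,j) \<and> fst c' \<ge> fst (2::nat,j))}
       = (\<lambda>j'. (2,j')) ` {j..L} \<union> (if j \<le> a then {(3,j)} else {})"
  proof (rule set_eqI)
    fix x :: cell
    obtain p q where x: "x = (p,q)" by fastforce
    have "p = 1 \<or> p = 2 \<or> p = 3 \<or> (p \<noteq> 1 \<and> p \<noteq> 2 \<and> p \<noteq> 3)" by blast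
    then show "x \<in> {c' \<in> young [L,L,a]. (fst c' = fst (2::nat,j) \<and> snd c' \<ge> snd (2::nat,j)) \<or> (snd c' = snd (2::nat,j) \<and> fst c' \<ge> fst (2::nat,j))}
       \<longleftrightarrow> x \<in> (\<lambda>j'. (2,j')) ` {j..L} \<union> (if j \<le> a then {(3,j)} else {})"
      using assms unfolding x young3 by (elim disjE) auto
  qed
  have c1: "card ((\<lambda>j'. (2::nat,j')) ` {j..L}) = L + 1 - j"
    by (subst card_image) (auto simp: inj_on_def)
  show ?thesis unfolding hook_def S
    using c1 by (auto simp: card_insert_if)
qed

lemma hook3:
  assumes "1 \<le> j" "j \<le> a"
  shows "hook [L,L,a] (3,j) = a + 1 - j"
proof -
  have S: "{c' \<in> young [L,L,a]. (fst c' = fst (3::nat,j) \<and> snd c' \<ge> snd (3::nat,j)) \<or> (snd c' = snd (3::nat,j) \<and> fst c' \<ge> fst (3::nat,j))}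
       = (\<lambda>j'. (3,j')) ` {j..a}"
  proof (rule set_eqI)
    fix x :: cell
    obtain p q where x: "x = (p,q)" by fastforce
    have "p = 1 \<or> p = 2 \<or> p = 3 \<or> (p \<noteq> 1 \<and> p \<noteq> 2 \<and> p \<noteq> 3)" by blast
    then show "x \<in> {c' \<in> young [L,L,a]. (fst c' = fst (3::nat,j) \<and> snd c' \<ge> snd (3::nat,j)) \<or> (snd c' = snd (3::nat,j) \<and> fst c' \<ge> fst (3::nat,j))}
       \<longleftrightarrow> x \<in> (\<lambda>j'. (3,j')) ` {j..a}"
      using assms unfolding x young3 by (elim disjE) auto
  qed
  show ?thesis unfolding hook_def S
    by (subst card_image) (auto simp: inj_on_def)
qed

lemma AA_pos:
  assumes "m + 1 \<le> a" "a \<le> L"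
  shows "AA L a m > 0"
proof -
  have "(\<Prod>j\<in>{j. 1\<le>j \<and> j+m+1\<le>a}. hook [L,L,a] (2,j)) > 0"
    by (rule prod_pos) (use assms in \<open>auto simp: hook2\<close>)
  moreover have "(\<Prod>j\<in>{j. a<j+m \<and> j\<le>a}. hook [L,L,a] (3,j)) > 0"
    by (rule prod_pos) (use assms in \<open>auto simp: hook3\<close>)
  ultimately show ?thesis unfolding AA_def by simp
qed

lemma AA_rec:
  assumes "m + 2 \<le> a" "a \<le> L"
  shows "AA L a m * (m+1) = AA L a (m+1) * (L - a + m + 3)"
proof -
  have s2: "{j. 1\<le>j \<and> j+m+1\<le>a} = insert (a-m-1) {j. 1\<le>j \<and> j+(m+1)+1\<le>a}" using assms by auto
  have s3: "{j. a<j+(m+1) \<and> j\<le>a} = insert (a-m) {j. a<j+m \<and> j\<le>a}" using assms by auto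
  have f2: "finite {j. 1\<le>j \<and> j+(m+1)+1\<le>a}" by (rule finite_subset[of _ "{..a}"]) auto
  have f3: "finite {j. a<j+m \<and> j\<le>a}" by (rule finite_subset[of _ "{..a}"]) auto
  have h2: "hook [L,L,a] (2, a-m-1) = L - a + m + 3" using assms by (simp add: hook2)
  have h3: "hook [L,L,a] (3, a-m) = m + 1" using assms by (simp add: hook3)
  have P2: "(\<Prod>j\<in>{j. 1\<le>j \<and> j+m+1\<le>a}. hook [L,L,a] (2,j)) = (L - a + m + 3) * (\<Prod>j\<in>{j. 1\<le>j \<and> j+(m+1)+1\<le>a}. hook [L,L,a] (2,j))"
    unfolding s2 using f2 h2 by (subst prod.insert) auto
  have P3: "(\<Prod>j\<in>{j. a<j+(m+1) \<and> j\<le>a}. hook [L,L,a] (3,j)) = (m+1) * (\<Prod>j\<in>{j. a<j+m \<and> j\<le>a}. hook [L,L,a] (3,j))"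
    unfolding s3 using f3 h3 assms by (subst prod.insert) auto
  show ?thesis unfolding AA_def P2 P3 by (simp only: mult_ac)
qed

lemma FF0: "FF L a 0 = 1"
proof -
  have "{j. L<j+0 \<and> j\<le>L} = {}" by auto
  then show ?thesis unfolding FF_def by (simp only:) simp
qed

lemma FF1: assumes "1 \<le> L" "a \<le> L" shows "FF L a 1 = (if L \<le> a then 2 else 1)"
proof -
  have "{j. L<j+1 \<and> j\<le>L} = {L}" by auto
  then show ?thesis using assms by (simp add: FF_def hook2)
qed

lemma FF2: assumes "2 \<le> L" "a \<le> L" shows "FF L a 2 = hook [L,L,a] (2,L-1) * hook [L,L,a] (2,L)"
proof -
  have "{j. L<j+2 \<and> j\<le>L} = {L-1, L}" using assms by auto
  then show ?thesis using assms by (simp add: FF_def)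
qed

lemma FF3: assumes "3 \<le> L" "a \<le> L" shows "FF L a 3 = hook [L,L,a] (2,L-2) * hook [L,L,a] (2,L-1) * hook [L,L,a] (2,L)"
proof -
  have "{j. L<j+3 \<and> j\<le>L} = {L-2, L-1, L}" using assms by auto
  moreover have "L-2 \<notin> {L-1, L}" "L-1 \<noteq> L" using assms by auto
  ultimately show ?thesis using assms by (simp add: FF_def mult.assoc)
qed



lemma sI_eq: "0 < a \<Longrightarrow> a < b \<Longrightarrow> sI {a,b} = b - 2"
  unfolding sI_def by (simp add: lamI_eq part3)

lemma not_lc_at:
  assumes "0 < k" "k < s" "x (k-1) * x (k+1) > (x k)^2"
  shows "\<not> log_concave x s"
  using assms unfolding log_concave_def by force

lemma case_far:
  assumes ab: "0 < a" "a + 3 \<le> b"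
  shows "\<not> log_concave (NN_coeff {a,b}) (sI {a,b})"
proof -
  have ab': "0 < a" "a < b" using ab by auto
  define L where "L = b - 1"
  define M where "M = {m. m+1 \<le> a}"
  define S where "S = (\<Sum>m\<in>M. AA L a m)"
  have fM: "finite M" unfolding M_def by (rule finite_subset[of _ "{..a}"]) auto
  have "AA L a 0 \<le> S" unfolding S_def by (rule member_le_sum) (use fM ab in \<open>auto simp: M_def\<close>)
  moreover have "AA L a 0 > 0" using AA_pos[of 0 a L] ab by (simp add: L_def)
  ultimately have Spos: "S > 0" by simp
  have setk: "{m. m+1 \<le> a \<and> k+a \<le> m+(b-1)} = M" if "k \<le> 2" for k using that ab by (auto simp: M_def)
  have C0: "NN_coeff {a,b} 0 = S"
    using NN_formula[OF ab', of 0] setk[of 0] ab by (simp add: FF0 S_def L_def)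
  have C1: "NN_coeff {a,b} 1 = S"
    using NN_formula[OF ab', of 1] setk[of 1] ab FF1[of L a] by (simp add: S_def L_def)
  have Lg: "a + 2 \<le> L" "3 \<le> L" using ab by (auto simp: L_def)
  have h1: "hook [L,L,a] (2,L-1) = 2" using hook2[of "L-1" L a] Lg by simp
  have h2: "hook [L,L,a] (2,L) = 1" using hook2[of L L a] Lg by simp
  have "FF L a 2 = 2"
    using FF2[of L a] Lg h1 h2 by simp
  then have C2: "NN_coeff {a,b} 2 = 2 * S"
    using NN_formula[OF ab', of 2] setk[of 2] ab by (simp add: S_def L_def)
  show ?thesis
  proof (rule not_lc_at[of 1])
    show "1 < sI {a,b}" using sI_eq[OF ab'] ab by simp
    show "(NN_coeff {a,b} 1)^2 < NN_coeff {a,b} (1-1) * NN_coeff {a,b} (1+1)"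
      using C0 C1 C2 Spos by (simp add: power2_eq_square numeral_2_eq_2)
  qed simp
qed



lemma pf2: fixes x :: real assumes "x \<ge> 0" shows "1/((x+1)*(x+2)) = 1/(x+1) - 1/(x+2)"
proof -
  have "x+1 \<noteq> 0" "x+2 \<noteq> 0" using assms by auto
  then show ?thesis by (simp add: field_simps)
qed
lemma pf3: fixes x :: real assumes "x \<ge> 0" shows "1/((x+1)*(x+2)*(x+3)) = (1/((x+1)*(x+2)) - 1/((x+2)*(x+3)))/2"
proof -
  define u where "u = (x+1)*(x+2)*(x+3)"
  have nz: "x+1 \<noteq> 0" "x+3 \<noteq> 0" using assms by auto
  have e1: "1/((x+1)*(x+2)) = (x+3)/u" unfolding u_def using nz by simp
  have e2: "1/((x+2)*(x+3)) = (x+1)/u" unfolding u_def using nz by (simp add: mult.commute mult.left_commute)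
  have A: "(x+3)/u - (x+1)/u = 2/u"
  proof -
    have "(x+3)/u - (x+1)/u = ((x+3) - (x+1))/u" by (rule diff_divide_distrib[symmetric])
    then show ?thesis by simp
  qed
  show ?thesis unfolding e1 e2 A unfolding u_def by simp
qed

lemma half_tele: "(x - y)/2 + (y - z)/2 = (x - z)/(2::real)"
  by (simp add: field_simps)

lemma tele2:
  fixes k n :: nat
  shows "k \<le> n \<Longrightarrow> (\<Sum>m\<in>{k..<n}. 1/((real m+1)*(real m+2))) = 1/(real k+1) - 1/(real n+1)"
proof (induction n)
  case 0 then show ?case by simp
next
  case (Suc n)
  show ?case
  proof (cases "k = Suc n")
    case True then show ?thesis by simp
  next
    case False
    then have "k \<le> n" using Suc.prems by simp
    then have "(\<Sum>m\<in>{k..<Suc n}. 1/((real m+1)*(real m+2))) = 1/(real k+1) - 1/(real n+1) + 1/((real n+1)*(real n+2))"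
      using Suc.IH by (simp add: sum.atLeastLessThan_Suc)
    also have "\<dots> = 1/(real k+1) - 1/(real (Suc n)+1)"
    proof -
      have h1: "1/((real n+1)*(real n+2)) = 1/(real n+1) - 1/(real n+2)" by (rule pf2) simp
      have h2: "real (Suc n) + 1 = real n + 2" by simp
      show ?thesis unfolding h1 h2 by simp
    qed
    finally show ?thesis .
  qed
qed

lemma tele3:
  fixes k n :: nat
  shows "k \<le> n \<Longrightarrow> (\<Sum>m\<in>{k..<n}. 1/((real m+1)*(real m+2)*(real m+3)))
     = (1/((real k+1)*(real k+2)) - 1/((real n+1)*(real n+2)))/2"
proof (induction n)
  case 0 then show ?case by simp
next
  case (Suc n)
  show ?case
  proof (cases "k = Suc n")
    case True then show ?thesis by simp
  next
    case False
    then have "k \<le> n" using Suc.prems by simp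
    then have "(\<Sum>m\<in>{k..<Suc n}. 1/((real m+1)*(real m+2)*(real m+3)))
       = (1/((real k+1)*(real k+2)) - 1/((real n+1)*(real n+2)))/2 + 1/((real n+1)*(real n+2)*(real n+3))"
      using Suc.IH by (simp add: sum.atLeastLessThan_Suc)
    also have "\<dots> = (1/((real k+1)*(real k+2)) - 1/((real (Suc n)+1)*(real (Suc n)+2)))/2"
    proof -
      have h1: "1/((real n+1)*(real n+2)*(real n+3)) = (1/((real n+1)*(real n+2)) - 1/((real n+2)*(real n+3)))/2" by (rule pf3) simp
      have h2: "(real (Suc n) + 1)*(real (Suc n) + 2) = (real n + 2)*(real n+3)" by (simp add: add.commute)
      show ?thesis unfolding h1 h2 by (rule half_tele)
    qed
    finally show ?thesis .
  qed
qed

lemma AA_closed0: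
  fixes a m :: nat
  shows "m + 1 \<le> a \<Longrightarrow> real (AA a a m) * ((real m+1)*(real m+2)) = 2 * real (AA a a 0)"
proof (induction m)
  case 0 then show ?case by simp
next
  case (Suc m)
  have r: "AA a a m * (m+1) = AA a a (m+1) * (m + 3)" using AA_rec[of m a a] Suc.prems by simp
  have e: "real (AA a a m) * (real m + 1) = real (AA a a (Suc m)) * (real m + 3)"
  proof -
    have "real (AA a a m * (m+1)) = real (AA a a (m+1) * (m + 3))" by (simp only: r)
    then show ?thesis by (simp add: algebra_simps)
  qed
  have "real (AA a a m) * ((real m+1)*(real m+2)) = (real (AA a a m) * (real m + 1)) * (real m+2)"
    by (simp add: mult.assoc)
  also have "\<dots> = (real (AA a a (Suc m)) * (real m + 3)) * (real m+2)" by (simp only: e)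
  also have "\<dots> = real (AA a a (Suc m)) * ((real (Suc m)+1)*(real (Suc m)+2))" by (simp add: algebra_simps)
  finally show ?case using Suc by simp
qed

lemma AA_closed1:
  fixes a m :: nat
  shows "m + 1 \<le> a \<Longrightarrow> real (AA (a+1) a m) * ((real m+1)*(real m+2)*(real m+3)) = 6 * real (AA (a+1) a 0)"
proof (induction m)
  case 0 then show ?case by simp
next
  case (Suc m)
  have r: "AA (a+1) a m * (m+1) = AA (a+1) a (m+1) * (m + 4)" using AA_rec[of m a "a+1"] Suc.prems by simp
  have e: "real (AA (a+1) a m) * (real m + 1) = real (AA (a+1) a (Suc m)) * (real m + 4)"
  proof -
    have "real (AA (a+1) a m * (m+1)) = real (AA (a+1) a (m+1) * (m + 4))" by (simp only: r)
    then show ?thesis by (simp add: algebra_simps)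
  qed
  have "real (AA (a+1) a m) * ((real m+1)*(real m+2)*(real m+3)) = (real (AA (a+1) a m) * (real m + 1)) * ((real m+2)*(real m+3))"
    by (simp add: mult.assoc)
  also have "\<dots> = (real (AA (a+1) a (Suc m)) * (real m + 4)) * ((real m+2)*(real m+3))" by (simp only: e)
  also have "\<dots> = real (AA (a+1) a (Suc m)) * ((real (Suc m)+1)*(real (Suc m)+2)*(real (Suc m)+3))" by (simp add: algebra_simps)
  finally show ?case using Suc by simp
qed



lemma sum_AA0:
  assumes "j \<le> a"
  shows "real (\<Sum>m\<in>{j..<a}. AA a a m) = 2 * real (AA a a 0) * (1/(real j+1) - 1/(real a+1))"
proof -
  have "real (\<Sum>m\<in>{j..<a}. AA a a m) = (\<Sum>m\<in>{j..<a}. real (AA a a m))" by simp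
  also have "\<dots> = (\<Sum>m\<in>{j..<a}. 2 * real (AA a a 0) * (1/((real m+1)*(real m+2))))"
  proof (rule sum.cong)
    fix m assume "m \<in> {j..<a}"
    then have "real (AA a a m) * ((real m+1)*(real m+2)) = 2 * real (AA a a 0)" using AA_closed0[of m a] by simp
    moreover have "(real m+1)*(real m+2) \<noteq> 0" by simp
    ultimately show "real (AA a a m) = 2 * real (AA a a 0) * (1/((real m+1)*(real m+2)))"
      by (simp add: field_simps)
  qed simp
  also have "\<dots> = 2 * real (AA a a 0) * (\<Sum>m\<in>{j..<a}. 1/((real m+1)*(real m+2)))"
    by (simp add: sum_distrib_left)
  also have "\<dots> = 2 * real (AA a a 0) * (1/(real j+1) - 1/(real a+1))" using tele2[OF assms] by simp
  finally show ?thesis .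
qed

lemma sum_AA1:
  assumes "j \<le> a"
  shows "real (\<Sum>m\<in>{j..<a}. AA (a+1) a m) = 3 * real (AA (a+1) a 0) * (1/((real j+1)*(real j+2)) - 1/((real a+1)*(real a+2)))"
proof -
  have "real (\<Sum>m\<in>{j..<a}. AA (a+1) a m) = (\<Sum>m\<in>{j..<a}. real (AA (a+1) a m))" by simp
  also have "\<dots> = (\<Sum>m\<in>{j..<a}. 6 * real (AA (a+1) a 0) * (1/((real m+1)*(real m+2)*(real m+3))))"
  proof (rule sum.cong)
    fix m assume "m \<in> {j..<a}"
    then have "real (AA (a+1) a m) * ((real m+1)*(real m+2)*(real m+3)) = 6 * real (AA (a+1) a 0)" using AA_closed1[of m a] by simp
    moreover have "(real m+1)*(real m+2)*(real m+3) \<noteq> 0" by simp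
    ultimately show "real (AA (a+1) a m) = 6 * real (AA (a+1) a 0) * (1/((real m+1)*(real m+2)*(real m+3)))"
      by (simp add: field_simps)
  qed simp
  also have "\<dots> = 6 * real (AA (a+1) a 0) * (\<Sum>m\<in>{j..<a}. 1/((real m+1)*(real m+2)*(real m+3)))"
    by (simp add: sum_distrib_left)
  also have "\<dots> = 3 * real (AA (a+1) a 0) * (1/((real j+1)*(real j+2)) - 1/((real a+1)*(real a+2)))"
    using tele3[OF assms] by simp
  finally show ?thesis .
qed



lemma case_near0:
  assumes a3: "3 \<le> a" and b: "b = a + 1"
  shows "\<not> log_concave (NN_coeff {a,b}) (sI {a,b})"
proof -
  have ab: "0 < a" "a < b" using assms by auto
  have bL: "b - 1 = a" using b by simp
  have set0: "{m. m+1 \<le> a \<and> 0+a \<le> m+a} = {0..<a}" by auto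
  have set1: "{m. m+1 \<le> a \<and> 1+a \<le> m+a} = {1..<a}" by auto
  have set2: "{m. m+1 \<le> a \<and> 2+a \<le> m+a} = {2..<a}" by auto
  have F1: "FF a a 1 = 2" using FF1[of a a] a3 by simp
  have h1: "hook [a,a,a] (2,a-1) = 3" using hook2[of "a-1" a a] a3 by simp
  have h2: "hook [a,a,a] (2,a) = 2" using hook2[of a a a] a3 by simp
  have F2: "FF a a 2 = 6" using FF2[of a a] a3 h1 h2 by simp
  have C0: "NN_coeff {a,b} 0 = (\<Sum>m\<in>{0..<a}. AA a a m)"
  proof -
    have "NN_coeff {a,b} 0 = FF (b-1) a 0 * (\<Sum>m\<in>{m. m+1 \<le> a \<and> 0+a \<le> m+(b-1)}. AA (b-1) a m)"
      by (rule NN_formula[OF ab]) (use a3 b in simp)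
    also have "\<dots> = (\<Sum>m\<in>{0..<a}. AA a a m)"
      by (simp only: set0 bL FF0 mult_1)
    finally show ?thesis .
  qed
  have C1: "NN_coeff {a,b} 1 = 2 * (\<Sum>m\<in>{1..<a}. AA a a m)"
  proof -
    have "NN_coeff {a,b} 1 = FF (b-1) a 1 * (\<Sum>m\<in>{m. m+1 \<le> a \<and> 1+a \<le> m+(b-1)}. AA (b-1) a m)"
      by (rule NN_formula[OF ab]) (use a3 b in simp)
    also have "\<dots> = 2 * (\<Sum>m\<in>{1..<a}. AA a a m)" by (simp only: set1 bL F1)
    finally show ?thesis .
  qed
  have C2: "NN_coeff {a,b} 2 = 6 * (\<Sum>m\<in>{2..<a}. AA a a m)"
  proof -
    have "NN_coeff {a,b} 2 = FF (b-1) a 2 * (\<Sum>m\<in>{m. m+1 \<le> a \<and> 2+a \<le> m+(b-1)}. AA (b-1) a m)"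
      by (rule NN_formula[OF ab]) (use a3 b in simp)
    also have "\<dots> = 6 * (\<Sum>m\<in>{2..<a}. AA a a m)" by (simp only: set2 bL F2)
    finally show ?thesis .
  qed
  define X where "X = real (AA a a 0)"
  define t where "t = 1/(real a+1)"
  have Xp: "X > 0" unfolding X_def using AA_pos[of 0 a a] a3 by simp
  have t0: "t > 0" unfolding t_def by simp
  have t4: "t \<le> 1/4" unfolding t_def using a3 by (simp add: field_simps)
  have R0: "real (NN_coeff {a,b} 0) = 2 * X * (1 - t)"
    using C0 sum_AA0[of 0 a] unfolding X_def t_def by simp
  have R1: "real (NN_coeff {a,b} 1) = 2 * (2 * X * (1/2 - t))"
    using C1 sum_AA0[of 1 a] a3 unfolding X_def t_def by simp
  have R2: "real (NN_coeff {a,b} 2) = 6 * (2 * X * (1/3 - t))"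
    using C2 sum_AA0[of 2 a] a3 unfolding X_def t_def by (simp add: numeral_2_eq_2)
  have key: "real (NN_coeff {a,b} 0) * real (NN_coeff {a,b} 2) - (real (NN_coeff {a,b} 1))^2
       = 8 * X^2 * (1/2 - 2*t + t^2)"
    unfolding R0 R1 R2 by (simp add: power2_eq_square algebra_simps)
  have "t^2 > 0" using t0 by simp
  then have "1/2 - 2*t + t^2 > 0" using t4 by linarith
  then have "8 * X^2 * (1/2 - 2*t + t^2) > 0" using Xp by simp
  then have "real ((NN_coeff {a,b} 1)^2) < real (NN_coeff {a,b} 0 * NN_coeff {a,b} 2)"
    using key by simp
  then have lt: "(NN_coeff {a,b} 1)^2 < NN_coeff {a,b} 0 * NN_coeff {a,b} 2" by (simp only: of_nat_less_iff)
  show ?thesis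
  proof (rule not_lc_at[of 1])
    show "1 < sI {a,b}" using sI_eq[OF ab] a3 b by simp
    show "(NN_coeff {a,b} 1)^2 < NN_coeff {a,b} (1-1) * NN_coeff {a,b} (1+1)"
      using lt by (simp add: numeral_2_eq_2)
  qed simp
qed



lemma case_near1:
  assumes a3: "3 \<le> a" and b: "b = a + 2"
  shows "\<not> log_concave (NN_coeff {a,b}) (sI {a,b})"
proof -
  have ab: "0 < a" "a < b" using assms by auto
  have bL: "b - 1 = a + 1" using b by simp
  have set1: "{m. m+1 \<le> a \<and> 1+a \<le> m+(a+1)} = {0..<a}" by auto
  have set2: "{m. m+1 \<le> a \<and> 2+a \<le> m+(a+1)} = {1..<a}" by auto
  have set3: "{m. m+1 \<le> a \<and> 3+a \<le> m+(a+1)} = {2..<a}" by auto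
  have F1: "FF (a+1) a 1 = 1" using FF1[of "a+1" a] a3 by simp
  have h0: "hook [a+1,a+1,a] (2,a-1) = 4" using hook2[of "a-1" "a+1" a] a3 by simp
  have h1: "hook [a+1,a+1,a] (2,a) = 3" using hook2[of "a" "a+1" a] a3 by simp
  have h2: "hook [a+1,a+1,a] (2,a+1) = 1" using hook2[of "a+1" "a+1" a] a3 by simp
  have F2: "FF (a+1) a 2 = 3" using FF2[of "a+1" a] a3 h1 h2 by simp
  have F3: "FF (a+1) a 3 = 12"
  proof -
    have "a + 1 - 2 = a - 1" "a + 1 - 1 = a" using a3 by auto
    then show ?thesis using FF3[of "a+1" a] a3 h0 h1 h2 by simp
  qed
  have C1: "NN_coeff {a,b} 1 = (\<Sum>m\<in>{0..<a}. AA (a+1) a m)"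
  proof -
    have "NN_coeff {a,b} 1 = FF (b-1) a 1 * (\<Sum>m\<in>{m. m+1 \<le> a \<and> 1+a \<le> m+(b-1)}. AA (b-1) a m)"
      by (rule NN_formula[OF ab]) (use a3 b in simp)
    also have "\<dots> = 1 * (\<Sum>m\<in>{0..<a}. AA (a+1) a m)" by (simp only: set1 bL F1)
    finally show ?thesis by simp
  qed
  have C2: "NN_coeff {a,b} 2 = 3 * (\<Sum>m\<in>{1..<a}. AA (a+1) a m)"
  proof -
    have "NN_coeff {a,b} 2 = FF (b-1) a 2 * (\<Sum>m\<in>{m. m+1 \<le> a \<and> 2+a \<le> m+(b-1)}. AA (b-1) a m)"
      by (rule NN_formula[OF ab]) (use a3 b in simp)
    also have "\<dots> = 3 * (\<Sum>m\<in>{1..<a}. AA (a+1) a m)" by (simp only: set2 bL F2)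
    finally show ?thesis .
  qed
  have C3: "NN_coeff {a,b} 3 = 12 * (\<Sum>m\<in>{2..<a}. AA (a+1) a m)"
  proof -
    have "NN_coeff {a,b} 3 = FF (b-1) a 3 * (\<Sum>m\<in>{m. m+1 \<le> a \<and> 3+a \<le> m+(b-1)}. AA (b-1) a m)"
      by (rule NN_formula[OF ab]) (use a3 b in simp)
    also have "\<dots> = 12 * (\<Sum>m\<in>{2..<a}. AA (a+1) a m)" by (simp only: set3 bL F3)
    finally show ?thesis .
  qed
  define X where "X = real (AA (a+1) a 0)"
  define w where "w = 1/((real a+1)*(real a+2))"
  have Xp: "X > 0" unfolding X_def using AA_pos[of 0 a "a+1"] a3 by simp
  have w0: "w > 0" unfolding w_def by simp
  have w20: "w \<le> 1/20"
  proof -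
    have "(4::real) * 5 \<le> (real a+1)*(real a+2)" using a3 by (intro mult_mono) auto
    then show ?thesis unfolding w_def by (simp add: field_simps)
  qed
  have R1: "real (NN_coeff {a,b} 1) = 3 * X * (1/2 - w)"
    using C1 sum_AA1[of 0 a] unfolding X_def w_def by simp
  have R2: "real (NN_coeff {a,b} 2) = 3 * (3 * X * (1/6 - w))"
    using C2 sum_AA1[of 1 a] a3 unfolding X_def w_def by simp
  have R3: "real (NN_coeff {a,b} 3) = 12 * (3 * X * (1/12 - w))"
    using C3 sum_AA1[of 2 a] a3 unfolding X_def w_def by (simp add: numeral_2_eq_2)
  have key: "real (NN_coeff {a,b} 1) * real (NN_coeff {a,b} 3) - (real (NN_coeff {a,b} 2))^2
       = 27 * X^2 * (1/12 - 4*w/3 + w^2)"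
    unfolding R1 R2 R3 by (simp add: power2_eq_square algebra_simps)
  have "w^2 > 0" using w0 by simp
  then have "1/12 - 4*w/3 + w^2 > 0" using w20 by linarith
  then have "27 * X^2 * (1/12 - 4*w/3 + w^2) > 0" using Xp by simp
  then have "real ((NN_coeff {a,b} 2)^2) < real (NN_coeff {a,b} 1 * NN_coeff {a,b} 3)"
    using key by simp
  then have lt: "(NN_coeff {a,b} 2)^2 < NN_coeff {a,b} 1 * NN_coeff {a,b} 3" by (simp only: of_nat_less_iff)
  show ?thesis
  proof (rule not_lc_at[of 2])
    show "2 < sI {a,b}" using sI_eq[OF ab] a3 b by simp
    show "(NN_coeff {a,b} 2)^2 < NN_coeff {a,b} (2-1) * NN_coeff {a,b} (2+1)"
      using lt by simp
  qed simp
qed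



lemma case_24: "log_concave (NN_coeff {2,4}) (sI {2,4})"
proof -
  have ab: "0 < (2::nat)" "(2::nat) < 4" by auto
  have s: "sI {2,4} = 2" using sI_eq[OF ab] by simp
  have set0: "{m. m+1 \<le> (2::nat) \<and> 0+2 \<le> m+3} = {0,1}" by auto
  have set1: "{m. m+1 \<le> (2::nat) \<and> 1+2 \<le> m+3} = {0,1}" by auto
  have set2: "{m. m+1 \<le> (2::nat) \<and> 2+2 \<le> m+3} = {1}" by auto
  have L3: "(4::nat) - 1 = 3" by simp
  have F1: "FF 3 2 1 = 1" using FF1[of 3 2] by simp
  have F2: "FF 3 2 2 = 3" using FF2[of 3 2] hook2[of 2 3 2] hook2[of 3 3 2] by simp
  have r: "AA 3 2 0 = 4 * AA 3 2 1" using AA_rec[of 0 2 3] by simp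
  have C0: "NN_coeff {2,4} 0 = AA 3 2 0 + AA 3 2 1"
  proof -
    have "NN_coeff {2,4} 0 = FF (4-1) 2 0 * (\<Sum>m\<in>{m. m+1 \<le> (2::nat) \<and> 0+2 \<le> m+(4-1)}. AA (4-1) 2 m)"
      by (rule NN_formula[OF ab]) simp
    also have "\<dots> = FF 3 2 0 * (\<Sum>m\<in>{0,1}. AA 3 2 m)" by (simp only: set0 L3)
    finally show ?thesis by (simp add: FF0)
  qed
  have C1: "NN_coeff {2,4} 1 = AA 3 2 0 + AA 3 2 1"
  proof -
    have "NN_coeff {2,4} 1 = FF (4-1) 2 1 * (\<Sum>m\<in>{m. m+1 \<le> (2::nat) \<and> 1+2 \<le> m+(4-1)}. AA (4-1) 2 m)"
      by (rule NN_formula[OF ab]) simp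
    also have "\<dots> = FF 3 2 1 * (\<Sum>m\<in>{0,1}. AA 3 2 m)" by (simp only: set1 L3)
    also have "\<dots> = 1 * (\<Sum>m\<in>{0,1}. AA 3 2 m)" by (simp only: F1)
    finally show ?thesis by simp
  qed
  have C2: "NN_coeff {2,4} 2 = 3 * AA 3 2 1"
  proof -
    have "NN_coeff {2,4} 2 = FF (4-1) 2 2 * (\<Sum>m\<in>{m. m+1 \<le> (2::nat) \<and> 2+2 \<le> m+(4-1)}. AA (4-1) 2 m)"
      by (rule NN_formula[OF ab]) simp
    also have "\<dots> = FF 3 2 2 * (\<Sum>m\<in>{1}. AA 3 2 m)" by (simp only: set2 L3)
    also have "\<dots> = 3 * (\<Sum>m\<in>{1}. AA 3 2 m)" by (simp only: F2)
    finally show ?thesis by simp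
  qed
  show ?thesis unfolding log_concave_def s
  proof (intro allI impI)
    fix k :: nat assume "0 < k \<and> k < 2"
    then have k: "k = 1" by simp
    have "NN_coeff {2,4} 0 * NN_coeff {2,4} 2 = 15 * (AA 3 2 1 * AA 3 2 1)" using C0 C2 r by simp
    also have "\<dots> \<le> 25 * (AA 3 2 1 * AA 3 2 1)" by simp
    also have "\<dots> = (NN_coeff {2,4} 1)^2" using C1 r by (simp add: power2_eq_square)
    finally show "NN_coeff {2,4} (k-1) * NN_coeff {2,4} (k+1) \<le> (NN_coeff {2,4} k)^2"
      using k by (simp add: numeral_2_eq_2)
  qed
qed

lemma lc_small: "s \<le> 1 \<Longrightarrow> log_concave x s"
  unfolding log_concave_def by auto

lemma rhs_iff:
  fixes a b :: nat
  assumes "0 < a" "a < b"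
  shows "{a, b} \<in> {{1, 2}, {1, 3}, {2, 3}, {2, 4}} \<longleftrightarrow> (a=1 \<and> b=2 \<or> a=1 \<and> b=3 \<or> a=2 \<and> b=3 \<or> a=2 \<and> b=4)"
  using assms by (auto simp: doubleton_eq_iff)

theorem corollary6p4:
  fixes a b :: nat
  assumes "0 < a" and "a < b"
  shows "log_concave (NN_coeff {a, b}) (sI {a, b})
           \<longleftrightarrow> {a, b} \<in> {{1, 2}, {1, 3}, {2, 3}, {2, 4}}"
proof -
  have ab: "0 < a" "a < b" by fact+
  consider "a + 3 \<le> b" | "b = a + 2" | "b = a + 1" using ab by linarith
  then show ?thesis
  proof cases
    case 1
    then show ?thesis using case_far[OF ab(1) 1] rhs_iff[OF ab] by auto
  next
    case 2
    note hb = 2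
    consider "a = 1" | "a = 2" | "3 \<le> a" using ab by linarith
    then show ?thesis
    proof cases
      case 1
      then show ?thesis using lc_small[of "sI {a,b}"] sI_eq[OF ab] rhs_iff[OF ab] hb by auto
    next
      case 2
      then show ?thesis using case_24 rhs_iff[OF ab] hb by auto
    next
      case 3
      then show ?thesis using case_near1[OF 3 hb] rhs_iff[OF ab] by auto
    qed
  next
    case 3
    note hb = 3
    consider "a = 1" | "a = 2" | "3 \<le> a" using ab by linarith
    then show ?thesis
    proof cases
      case 1
      then show ?thesis using lc_small[of "sI {a,b}"] sI_eq[OF ab] rhs_iff[OF ab] hb by auto
    next
      case 2
      then show ?thesis using lc_small[of "sI {a,b}"] sI_eq[OF ab] rhs_iff[OF ab] hb by auto
    next
      case 3
      then show ?thesis using case_near0[OF 3 hb] rhs_iff[OF ab] by auto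
    qed
  qed
qed


end
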